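(* Let $n\ge 2$ and let $P_n$ be the path on $n$ vertices. Then $$\tau(P_n)=\begin{cases}1 & \text{if } n\equiv 0 \pmod 4,\\ \lfloor n/4\rfloor & \text{if } n\equiv 1 \pmod 4,\\ (\lfloor n/4\rfloor+1)^2 & \text{if } n\equiv 2 \pmod 4,\\ \lfloor n/4\rfloor+2 & \text{if } n\equiv 3 \pmod 4.\end{cases}$$
   Context: A set $D \subseteq V(G)$ is a total dominating set of a graph $G$ if every vertex of $G$ has a neighbor in $D$. $\gamma_t(G)$ is the minimum cardinality of a total dominating set; a minimum one is a $\gamma_t(G)$-set, and $\tau(G)$ is the number of $\gamma_t(G)$-sets. *)

theory Defs
  imports Main
begin

definition total_dominating_set :: "'a set \<Rightarrow> ('a \<Rightarrow> 'a \<Rightarrow> bool) \<Rightarrow> 'a set \<Rightarrow> bool" where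
  "total_dominating_set V E D \<longleftrightarrow> D \<subseteq> V \<and> (\<forall>v\<in>V. \<exists>u\<in>D. E v u)"

definition gamma_t :: "'a set \<Rightarrow> ('a \<Rightarrow> 'a \<Rightarrow> bool) \<Rightarrow> nat" where
  "gamma_t V E = (LEAST k. \<exists>D. total_dominating_set V E D \<and> card D = k)"

definition tau :: "'a set \<Rightarrow> ('a \<Rightarrow> 'a \<Rightarrow> bool) \<Rightarrow> nat" where
  "tau V E = card {D. total_dominating_set V E D \<and> card D = gamma_t V E}"

definition path_vertices :: "nat \<Rightarrow> nat set" where
  "path_vertices n = {1..n}"

definition path_adj :: "nat \<Rightarrow> nat \<Rightarrow> bool" where
  "path_adj i j \<longleftrightarrow> i + 1 = j \<or> j + 1 = i"

end

theory Submission
  imports Defs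
begin

definition S :: "nat \<Rightarrow> nat \<Rightarrow> bool \<Rightarrow> bool \<Rightarrow> nat set set" where
"S n k a b = {D. D \<subseteq> {1..n} \<and> card D = k \<and> (\<forall>i\<in>{1..<n}. i - 1 \<in> D \<or> i + 1 \<in> D) \<and> (n - 1 \<in> D \<longleftrightarrow> a) \<and> (n \<in> D \<longleftrightarrow> b)}"

lemma S_finite: "finite (S n k a b)"
  by (rule finite_subset[of _ "Pow {1..n}"]) (auto simp: S_def)

lemma sub_Suc: "D \<subseteq> {1..Suc n} \<Longrightarrow> Suc n \<notin> D \<Longrightarrow> D \<subseteq> {1..n}"
  by (auto simp: subset_iff le_Suc_eq)

lemma stepF_set: "n \<ge> 1 \<Longrightarrow> S (Suc n) k b False = S n k True b"
proof (rule set_eqI, rule iffI)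
  fix D assume n: "n \<ge> 1" and D: "D \<in> S (Suc n) k b False"
  have d: "\<forall>i\<in>{1..<Suc n}. i - 1 \<in> D \<or> i + 1 \<in> D" using D unfolding S_def by auto
  have "n - 1 \<in> D" using d[rule_format, of n] n D unfolding S_def by auto
  then show "D \<in> S n k True b" using D d sub_Suc[of D n] unfolding S_def by auto
next
  fix D assume n: "n \<ge> 1" and D: "D \<in> S n k True b"
  show "D \<in> S (Suc n) k b False" using D n unfolding S_def
    by (auto simp: subset_iff less_Suc_eq)
qed

definition U :: "nat \<Rightarrow> nat \<Rightarrow> bool \<Rightarrow> nat set set" where
"U n k b = {D. D \<subseteq> {1..n} \<and> card D = k \<and> (\<forall>i\<in>{1..<n}. i - 1 \<in> D \<or> i + 1 \<in> D) \<and> (n \<in> D \<longleftrightarrow> b)}"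

lemma U_split: "U n k b = S n k True b \<union> S n k False b"
  unfolding U_def S_def by auto

lemma card_U: "card (U n k b) = card (S n k True b) + card (S n k False b)"
  unfolding U_split by (rule card_Un_disjoint) (auto simp: S_finite S_def)

lemma stepT_set: "n \<ge> 1 \<Longrightarrow> S (Suc n) (Suc k) b True = insert (Suc n) ` U n k b"
proof (rule set_eqI, rule iffI)
  fix D assume n: "n \<ge> 1" and D: "D \<in> S (Suc n) (Suc k) b True"
  have fin: "finite D" using D unfolding S_def by (auto intro: finite_subset)
  have "D = insert (Suc n) (D - {Suc n})" using D unfolding S_def by auto
  moreover have "D - {Suc n} \<in> U n k b"
    using D fin unfolding S_def U_def
    apply (auto)
    done
  ultimately show "D \<in> insert (Suc n) ` U n k b" by blast
next
  fix D assume n: "n \<ge> 1" and D: "D \<in> insert (Suc n) ` U n k b"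
  then obtain E where E: "E \<in> U n k b" "D = insert (Suc n) E" by auto
  have fin: "finite E" using E unfolding U_def by (auto intro: finite_subset)
  have nE: "Suc n \<notin> E" using E unfolding U_def by auto
  show "D \<in> S (Suc n) (Suc k) b True"
    using E fin nE n unfolding S_def U_def
    by auto
qed

lemma stepT_card: "n \<ge> 1 \<Longrightarrow> card (S (Suc n) (Suc k) b True) = card (S n k True b) + card (S n k False b)"
proof -
  assume n: "n \<ge> 1"
  have "inj_on (insert (Suc n)) (U n k b)"
  proof (rule inj_onI)
    fix X Y assume X: "X \<in> U n k b" and Y: "Y \<in> U n k b" and e: "insert (Suc n) X = insert (Suc n) Y"
    have "Suc n \<notin> X" "Suc n \<notin> Y" using X Y unfolding U_def by auto
    then show "X = Y" using e by (simp add: insert_ident)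
  qed
  then show ?thesis using n by (simp add: stepT_set card_image card_U)
qed

lemma step0_card: "card (S (Suc n) 0 b True) = 0"
proof -
  have "S (Suc n) 0 b True = {}" unfolding S_def
    by (auto simp: card_eq_0_iff dest: finite_subset)
  then show ?thesis by simp
qed


definition good :: "nat \<Rightarrow> bool \<Rightarrow> bool \<Rightarrow> nat \<Rightarrow> nat \<Rightarrow> bool" where
"good n a b m c \<longleftrightarrow> (\<forall>k<m. card (S n k a b) = 0) \<and> card (S n m a b) = c"

lemma stepF: "n \<ge> 1 \<Longrightarrow> good n True b m c \<Longrightarrow> good (Suc n) b False m c"
  unfolding good_def by (simp add: stepF_set)

lemma stepT: assumes n: "n \<ge> 1" and g1: "good n True b m1 c1" and g2: "good n False b m2 c2"
  shows "good (Suc n) b True (Suc (min m1 m2)) ((if m1 \<le> m2 then c1 else 0) + (if m2 \<le> m1 then c2 else 0))"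
  unfolding good_def
proof (intro conjI allI impI)
  fix k assume k: "k < Suc (min m1 m2)"
  show "card (S (Suc n) k b True) = 0"
  proof (cases k)
    case 0 then show ?thesis by (simp add: step0_card)
  next
    case (Suc j) then show ?thesis using k g1 g2 n by (simp add: stepT_card good_def)
  qed
next
  show "card (S (Suc n) (Suc (min m1 m2)) b True) = (if m1 \<le> m2 then c1 else 0) + (if m2 \<le> m1 then c2 else 0)"
    using g1 g2 n by (auto simp: stepT_card good_def min_def)
qed

lemma S1T: "S (Suc 0) k True b = {}" unfolding S_def by auto

lemma base1: "good 1 True b 100 0" unfolding good_def by (simp add: S1T)

lemma base2: "good 1 False False 0 1"
proof -
  have "S 1 0 False False = {{}}" unfolding S_def by (auto simp: card_eq_0_iff dest: finite_subset)
  then show ?thesis unfolding good_def by simp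
qed

lemma base3: "good 1 False True 1 1"
proof -
  have "S 1 0 False True = {}" unfolding S_def by (auto simp: card_eq_0_iff dest: finite_subset)
  moreover have "S 1 1 False True = {{1}}" unfolding S_def
    by (auto simp: card_Suc_eq)
  ultimately show ?thesis unfolding good_def by simp
qed


definition Q0 where "Q0 q \<longleftrightarrow> good (4*q) False False (2*q) q \<and> good (4*q) False True (2*q+1) (q^2)
  \<and> good (4*q) True False (2*q) 1 \<and> good (4*q) True True (2*q+1) q"
definition Q1 where "Q1 q \<longleftrightarrow> good (4*q+1) False False (2*q) 1 \<and> good (4*q+1) False True (2*q+1) (q+1)
  \<and> good (4*q+1) True False (2*q+1) q \<and> good (4*q+1) True True (2*q+2) (q*(q+1))"
definition Q2 where "Q2 q \<longleftrightarrow> good (4*q+2) False False (2*q+1) q \<and> good (4*q+2) False True (2*q+1) 1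
  \<and> good (4*q+2) True False (2*q+2) (q*(q+1)) \<and> good (4*q+2) True True (2*q+2) (q+1)"
definition Q3 where "Q3 q \<longleftrightarrow> good (4*q+3) False False (2*q+2) (q*(q+1)) \<and> good (4*q+3) False True (2*q+2) q
  \<and> good (4*q+3) True False (2*q+2) (q+1) \<and> good (4*q+3) True True (2*q+2) 1"

lemma good_cong: "good n a b m c \<Longrightarrow> n = n' \<Longrightarrow> m = m' \<Longrightarrow> c = c' \<Longrightarrow> good n' a b m' c'"
  by simp

lemma Q01: assumes "q \<ge> 1" "Q0 q" shows "Q1 q"
proof -
  have n: "4*q \<ge> 1" using assms by simp
  note h = assms(2)[unfolded Q0_def]
  note ff = h[THEN conjunct1] and ft = h[THEN conjunct2, THEN conjunct1]
    and tf = h[THEN conjunct2, THEN conjunct2, THEN conjunct1] and tt = h[THEN conjunct2, THEN conjunct2, THEN conjunct2]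
  have a: "good (4*q+1) False False (2*q) 1" by (rule good_cong[OF stepF[OF n tf]]) (simp_all add: power2_eq_square algebra_simps)
  have b: "good (4*q+1) True False (2*q+1) q" by (rule good_cong[OF stepF[OF n tt]]) (simp_all add: power2_eq_square algebra_simps)
  have c: "good (4*q+1) False True (2*q+1) (q+1)" by (rule good_cong[OF stepT[OF n tf ff]]) (simp_all add: power2_eq_square algebra_simps)
  have d: "good (4*q+1) True True (2*q+2) (q*(q+1))" by (rule good_cong[OF stepT[OF n tt ft]]) (simp_all add: power2_eq_square algebra_simps)
  show ?thesis using a b c d unfolding Q1_def by (simp add: algebra_simps)
qed

lemma Q12: assumes "q \<ge> 1" "Q1 q" shows "Q2 q"
proof -
  have n: "4*q+1 \<ge> 1" using assms by simp
  note h = assms(2)[unfolded Q1_def]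
  note ff = h[THEN conjunct1] and ft = h[THEN conjunct2, THEN conjunct1]
    and tf = h[THEN conjunct2, THEN conjunct2, THEN conjunct1] and tt = h[THEN conjunct2, THEN conjunct2, THEN conjunct2]
  have a: "good (4*q+2) False False (2*q+1) q" by (rule good_cong[OF stepF[OF n tf]]) (simp_all add: power2_eq_square algebra_simps)
  have b: "good (4*q+2) True False (2*q+2) (q*(q+1))" by (rule good_cong[OF stepF[OF n tt]]) (simp_all add: power2_eq_square algebra_simps)
  have c: "good (4*q+2) False True (2*q+1) 1" by (rule good_cong[OF stepT[OF n tf ff]]) (simp_all add: power2_eq_square algebra_simps)
  have d: "good (4*q+2) True True (2*q+2) (q+1)" by (rule good_cong[OF stepT[OF n tt ft]]) (simp_all add: power2_eq_square algebra_simps)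
  show ?thesis using a b c d unfolding Q2_def by (simp add: algebra_simps)
qed

lemma Q23: assumes "q \<ge> 1" "Q2 q" shows "Q3 q"
proof -
  have n: "4*q+2 \<ge> 1" using assms by simp
  note h = assms(2)[unfolded Q2_def]
  note ff = h[THEN conjunct1] and ft = h[THEN conjunct2, THEN conjunct1]
    and tf = h[THEN conjunct2, THEN conjunct2, THEN conjunct1] and tt = h[THEN conjunct2, THEN conjunct2, THEN conjunct2]
  have a: "good (4*q+3) False False (2*q+2) (q*(q+1))" by (rule good_cong[OF stepF[OF n tf]]) (simp_all add: power2_eq_square algebra_simps)
  have b: "good (4*q+3) True False (2*q+2) (q+1)" by (rule good_cong[OF stepF[OF n tt]]) (simp_all add: power2_eq_square algebra_simps)
  have c: "good (4*q+3) False True (2*q+2) q" by (rule good_cong[OF stepT[OF n tf ff]]) (simp_all add: power2_eq_square algebra_simps)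
  have d: "good (4*q+3) True True (2*q+2) 1" by (rule good_cong[OF stepT[OF n tt ft]]) (simp_all add: power2_eq_square algebra_simps)
  show ?thesis using a b c d unfolding Q3_def by (simp add: algebra_simps)
qed

lemma Q30: assumes "q \<ge> 1" "Q3 q" shows "Q0 (Suc q)"
proof -
  have n: "4*q+3 \<ge> 1" using assms by simp
  note h = assms(2)[unfolded Q3_def]
  note ff = h[THEN conjunct1] and ft = h[THEN conjunct2, THEN conjunct1]
    and tf = h[THEN conjunct2, THEN conjunct2, THEN conjunct1] and tt = h[THEN conjunct2, THEN conjunct2, THEN conjunct2]
  have a: "good (4*Suc q) False False (2*Suc q) (Suc q)" by (rule good_cong[OF stepF[OF n tf]]) (simp_all add: power2_eq_square algebra_simps)
  have b: "good (4*Suc q) True False (2*Suc q) 1" by (rule good_cong[OF stepF[OF n tt]]) (simp_all add: power2_eq_square algebra_simps)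
  have c: "good (4*Suc q) False True (2*Suc q+1) ((Suc q)^2)" by (rule good_cong[OF stepT[OF n tf ff]]) (simp_all add: power2_eq_square algebra_simps)
  have d: "good (4*Suc q) True True (2*Suc q+1) (Suc q)" by (rule good_cong[OF stepT[OF n tt ft]]) (simp_all add: power2_eq_square algebra_simps)
  show ?thesis using a b c d unfolding Q0_def by blast
qed


lemma Q0_1: "Q0 1"
proof -
  have n1: "(1::nat) \<ge> 1" by simp
  have n2: "(2::nat) \<ge> 1" by simp
  have n3: "(3::nat) \<ge> 1" by simp
  have ff2: "good 2 False False 100 0" by (rule good_cong[OF stepF[OF n1 base1[of False]]]) simp_all
  have tf2: "good 2 True False 100 0" by (rule good_cong[OF stepF[OF n1 base1[of True]]]) simp_all
  have ft2: "good 2 False True 1 1" by (rule good_cong[OF stepT[OF n1 base1[of False] base2]]) simp_all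
  have tt2: "good 2 True True 2 1" by (rule good_cong[OF stepT[OF n1 base1[of True] base3]]) simp_all
  have ff3: "good 3 False False 100 0" by (rule good_cong[OF stepF[OF n2 tf2]]) simp_all
  have tf3: "good 3 True False 2 1" by (rule good_cong[OF stepF[OF n2 tt2]]) simp_all
  have ft3: "good 3 False True 101 0" by (rule good_cong[OF stepT[OF n2 tf2 ff2]]) simp_all
  have tt3: "good 3 True True 2 1" by (rule good_cong[OF stepT[OF n2 tt2 ft2]]) simp_all
  have ff4: "good 4 False False 2 1" by (rule good_cong[OF stepF[OF n3 tf3]]) simp_all
  have tf4: "good 4 True False 2 1" by (rule good_cong[OF stepF[OF n3 tt3]]) simp_all
  have ft4: "good 4 False True 3 1" by (rule good_cong[OF stepT[OF n3 tf3 ff3]]) simp_all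
  have tt4: "good 4 True True 3 1" by (rule good_cong[OF stepT[OF n3 tt3 ft3]]) simp_all
  show ?thesis unfolding Q0_def using ff4 tf4 ft4 tt4 by simp
qed

lemma small2: "good 2 True False 100 0 \<and> good 2 True True 2 1"
proof -
  have n1: "(1::nat) \<ge> 1" by simp
  have tf2: "good 2 True False 100 0" by (rule good_cong[OF stepF[OF n1 base1[of True]]]) simp_all
  have tt2: "good 2 True True 2 1" by (rule good_cong[OF stepT[OF n1 base1[of True] base3]]) simp_all
  show ?thesis using tf2 tt2 by simp
qed

lemma small3: "good 3 True False 2 1 \<and> good 3 True True 2 1"
proof -
  have n1: "(1::nat) \<ge> 1" by simp
  have n2: "(2::nat) \<ge> 1" by simp
  have ff2: "good 2 False False 100 0" by (rule good_cong[OF stepF[OF n1 base1[of False]]]) simp_all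
  have tf2: "good 2 True False 100 0" by (rule good_cong[OF stepF[OF n1 base1[of True]]]) simp_all
  have ft2: "good 2 False True 1 1" by (rule good_cong[OF stepT[OF n1 base1[of False] base2]]) simp_all
  have tt2: "good 2 True True 2 1" by (rule good_cong[OF stepT[OF n1 base1[of True] base3]]) simp_all
  have tf3: "good 3 True False 2 1" by (rule good_cong[OF stepF[OF n2 tt2]]) simp_all
  have tt3: "good 3 True True 2 1" by (rule good_cong[OF stepT[OF n2 tt2 ft2]]) simp_all
  show ?thesis using tf3 tt3 by simp
qed

lemma Q_all: "q \<ge> 1 \<Longrightarrow> Q0 q \<and> Q1 q \<and> Q2 q \<and> Q3 q"
proof (induction q rule: dec_induct)
  case base then show ?case using Q0_1 Q01 Q12 Q23 by blast
next
  case (step q) then show ?case using Q01 Q12 Q23 Q30 by simp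
qed

lemma tds_set: assumes "n \<ge> 2"
  shows "{D. total_dominating_set (path_vertices n) path_adj D \<and> card D = k} = S n k True True \<union> S n k True False"
proof (rule set_eqI, rule iffI)
  fix D assume D: "D \<in> {D. total_dominating_set (path_vertices n) path_adj D \<and> card D = k}"
  have sub: "D \<subseteq> {1..n}" and dom: "\<forall>v\<in>{1..n}. \<exists>u\<in>D. v + 1 = u \<or> u + 1 = v" and k: "card D = k"
    using D by (auto simp: total_dominating_set_def path_vertices_def path_adj_def)
  have d1: "\<forall>i\<in>{1..<n}. i - 1 \<in> D \<or> i + 1 \<in> D"
  proof
    fix i assume i: "i \<in> {1..<n}"
    then obtain u where "u \<in> D" "i + 1 = u \<or> u + 1 = i" using dom by fastforce
    then show "i - 1 \<in> D \<or> i + 1 \<in> D" by auto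
  qed
  have "n - 1 \<in> D"
  proof -
    obtain u where u: "u \<in> D" "n + 1 = u \<or> u + 1 = n" using dom assms by fastforce
    have "u \<le> n" using u sub by auto
    then show ?thesis using u by auto
  qed
  then show "D \<in> S n k True True \<union> S n k True False" using sub d1 k unfolding S_def by auto
next
  fix D assume D: "D \<in> S n k True True \<union> S n k True False"
  have sub: "D \<subseteq> {1..n}" and d1: "\<forall>i\<in>{1..<n}. i - 1 \<in> D \<or> i + 1 \<in> D" and k: "card D = k"
    and nn: "n - 1 \<in> D"
    using D unfolding S_def by auto
  have "\<forall>v\<in>{1..n}. \<exists>u\<in>D. path_adj v u"
  proof
    fix v assume v: "v \<in> {1..n}"
    show "\<exists>u\<in>D. path_adj v u"
    proof (cases "v = n")
      case True then show ?thesis using nn assms by (intro bexI[of _ "n - 1"]) (auto simp: path_adj_def)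
    next
      case False
      then have "v \<in> {1..<n}" using v by auto
      then have "v - 1 \<in> D \<or> v + 1 \<in> D" using d1 by blast
      then show ?thesis
      proof
        assume "v - 1 \<in> D" then show ?thesis using v by (intro bexI[of _ "v - 1"]) (auto simp: path_adj_def)
      next
        assume "v + 1 \<in> D" then show ?thesis by (intro bexI[of _ "v + 1"]) (auto simp: path_adj_def)
      qed
    qed
  qed
  then show "D \<in> {D. total_dominating_set (path_vertices n) path_adj D \<and> card D = k}"
    using sub k by (auto simp: total_dominating_set_def path_vertices_def)
qed

lemma tds_card: "n \<ge> 2 \<Longrightarrow> card {D. total_dominating_set (path_vertices n) path_adj D \<and> card D = k}
   = card (S n k True True) + card (S n k True False)"
  unfolding tds_set by (rule card_Un_disjoint) (auto simp: S_finite S_def)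

lemma final: assumes n: "n \<ge> 2" and g1: "good n True True m1 c1" and g2: "good n True False m2 c2"
  and c: "c = (if m1 \<le> m2 then c1 else 0) + (if m2 \<le> m1 then c2 else 0)" and cpos: "c > 0"
  shows "tau (path_vertices n) path_adj = c"
proof -
  define T where "T k = {D. total_dominating_set (path_vertices n) path_adj D \<and> card D = k}" for k
  have fin: "finite (T k)" for k unfolding T_def tds_set[OF n] using S_finite by simp
  have cT: "card (T k) = card (S n k True True) + card (S n k True False)" for k
    unfolding T_def using tds_card[OF n] .
  have below: "T k = {}" if "k < min m1 m2" for k
    using that g1 g2 cT[of k] fin[of k] unfolding good_def by auto
  have at: "card (T (min m1 m2)) = c" using g1 g2 cT[of "min m1 m2"] c unfolding good_def
    by (auto simp: min_def)
  then have ne: "T (min m1 m2) \<noteq> {}" using cpos by auto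
  have "gamma_t (path_vertices n) path_adj = min m1 m2"
    unfolding gamma_t_def
  proof (rule Least_equality)
    show "\<exists>D. total_dominating_set (path_vertices n) path_adj D \<and> card D = min m1 m2"
      using ne unfolding T_def by auto
  next
    fix y assume "\<exists>D. total_dominating_set (path_vertices n) path_adj D \<and> card D = y"
    then have "T y \<noteq> {}" unfolding T_def by auto
    then show "min m1 m2 \<le> y" using below by (meson not_le)
  qed
  then show ?thesis using at unfolding tau_def T_def by simp
qed


theorem theorem5p1:
  fixes n :: nat
  assumes "n \<ge> 2"
  shows "tau (path_vertices n) path_adj =
    (if n mod 4 = 0 then 1
     else if n mod 4 = 1 then n div 4
     else if n mod 4 = 2 then (n div 4 + 1)^2
     else n div 4 + 2)"
proof -
  consider "n = 2" | "n = 3" | "n \<ge> 4" using assms by linarith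
  then show ?thesis
  proof cases
    case 1
    have "tau (path_vertices n) path_adj = 1"
      using final[of n 2 1 100 0 1] small2 1 by simp
    then show ?thesis using 1 by simp
  next
    case 2
    have "tau (path_vertices n) path_adj = 2"
      using final[of n 2 1 2 1 2] small3 2 by simp
    then show ?thesis using 2 by simp
  next
    case 3
    define q where "q = n div 4"
    have q1: "q \<ge> 1" using 3 q_def by simp
    have nq: "n = 4*q + n mod 4" using q_def by simp
    have Q: "Q0 q" "Q1 q" "Q2 q" "Q3 q" using Q_all[OF q1] by auto
    have n2: "n \<ge> 2" using 3 by simp
    consider "n mod 4 = 0" | "n mod 4 = 1" | "n mod 4 = 2" | "n mod 4 = 3" by linarith
    then show ?thesis
    proof cases
      case 1
      then have e: "n = 4*q" using nq by simp
      have "tau (path_vertices n) path_adj = 1"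
        using final[OF n2, of "2*q+1" q "2*q" 1 1] Q(1) unfolding Q0_def e by simp
      then show ?thesis using 1 by simp
    next
      case 2
      then have e: "n = 4*q+1" using nq by simp
      have "tau (path_vertices n) path_adj = q"
        using final[OF n2, of "2*q+2" "q*(q+1)" "2*q+1" q q] Q(2) q1 unfolding Q1_def e by simp
      then show ?thesis using 2 q_def by simp
    next
      case 3
      then have e: "n = 4*q+2" using nq by simp
      have "tau (path_vertices n) path_adj = (q+1)^2"
        using final[OF n2, of "2*q+2" "q+1" "2*q+2" "q*(q+1)" "(q+1)^2"] Q(3) q1 unfolding Q2_def e
        by (simp add: power2_eq_square algebra_simps)
      then show ?thesis using 3 q_def by simp
    next
      case 4
      then have e: "n = 4*q+3" using nq by simp
      have "tau (path_vertices n) path_adj = q+2"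
        using final[OF n2, of "2*q+2" 1 "2*q+2" "q+1" "q+2"] Q(4) q1 unfolding Q3_def e by simp
      then show ?thesis using 4 q_def by simp
    qed
  qed
qed

end
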